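(* Let $\mathcal H_1,\mathcal H_2$ be finite-dimensional Hilbert spaces and let $\psi\in\mathcal H_1\otimes\mathcal H_2$ be a unit vector with Schmidt representation $\psi=\sum_i\sqrt{p_i}\,\phi_i\otimes\chi_i$, where $\{\phi_i\}$ and $\{\chi_i\}$ are orthonormal bases of $\mathcal H_1$ and $\mathcal H_2$ respectively, $p_i\ge 0$ and $\sum_i p_i=1$. Let $P_\psi=|\psi\rangle\langle\psi|$ be the orthogonal projection onto $\mathbb C\psi$. Then $$\|P_\psi\|_\gamma=\sum_{i,j}\sqrt{p_ip_j}=\Big(\sum_i\sqrt{p_i}\Big)^2 .$$
   Context: For a finite-dimensional Hilbert space $\mathcal H$, $\mathcal T(\mathcal H)$ denotes the trace class operators on $\mathcal H$ (here all linear operators) and $\|x\|_1=\mathrm{Tr}\sqrt{x^\dagger x}$ the trace norm. For $t$ an operator on $\mathcal H_1\otimes\mathcal H_2$ (finite-dimensional), the greatest cross norm is $$\|t\|_\gamma:=\inf\Big\{\sum_{i=1}^n\|u_i\|_1\|v_i\|_1\ :\ t=\sum_{i=1}^n u_i\otimes v_i,\ u_i\in\mathcal T(\mathcal H_1),\ v_i\in\mathcal T(\mathcal H_2),\ n\in\mathbb N\Big\},$$ the infimum over all finite decompositions of $t$ into elementary tensors. *)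

theory Defs
  imports Complex_Main
begin

text \<open>Finite-dimensional Hilbert spaces are modelled concretely as coordinate spaces
  \<open>'a \<Rightarrow> complex\<close> over a finite index type \<open>'a\<close> (standard inner product);
  operators are matrices \<open>'a \<Rightarrow> 'a \<Rightarrow> complex\<close>.  The tensor product
  \<open>H1 \<otimes> H2\<close> is the coordinate space over \<open>'a \<times> 'b\<close>.\<close>

type_synonym 'a vec = "'a \<Rightarrow> complex"
type_synonym 'a op = "'a \<Rightarrow> 'a \<Rightarrow> complex"

definition cinner :: "('a::finite) vec \<Rightarrow> 'a vec \<Rightarrow> complex" where
  "cinner v w = (\<Sum>k\<in>UNIV. cnj (v k) * w k)"

definition orthonormal_basis :: "('i \<Rightarrow> ('a::finite) vec) \<Rightarrow> bool" where
  "orthonormal_basis e \<longleftrightarrow>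
     (\<forall>i j. cinner (e i) (e j) = (if i = j then 1 else 0)) \<and>
     (\<forall>v::'a vec. \<exists>c::'i \<Rightarrow> complex. \<exists>F. finite F \<and> v = (\<lambda>k. \<Sum>i\<in>F. c i * e i k))"

definition mmult :: "('a::finite) op \<Rightarrow> 'a op \<Rightarrow> 'a op" where
  "mmult x y = (\<lambda>i j. \<Sum>k\<in>UNIV. x i k * y k j)"

definition adjoint :: "'a op \<Rightarrow> 'a op" where
  "adjoint x = (\<lambda>i j. cnj (x j i))"

definition trace :: "('a::finite) op \<Rightarrow> complex" where
  "trace x = (\<Sum>i\<in>UNIV. x i i)"

definition psd :: "('a::finite) op \<Rightarrow> bool" where
  "psd s \<longleftrightarrow> adjoint s = s \<and>
     (\<forall>v. (\<Sum>i\<in>UNIV. \<Sum>j\<in>UNIV. cnj (v i) * s i j * v j) \<in> \<real> \<and>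
          0 \<le> Re (\<Sum>i\<in>UNIV. \<Sum>j\<in>UNIV. cnj (v i) * s i j * v j))"

definition trace_norm :: "('a::finite) op \<Rightarrow> real" where
  "trace_norm x = Re (trace (THE s. psd s \<and> mmult s s = mmult (adjoint x) x))"

definition tensor_op :: "'a op \<Rightarrow> 'b op \<Rightarrow> ('a \<times> 'b) op" where
  "tensor_op u v = (\<lambda>(i, j) (k, l). u i k * v j l)"

definition tensor_vec :: "'a vec \<Rightarrow> 'b vec \<Rightarrow> ('a \<times> 'b) vec" where
  "tensor_vec x y = (\<lambda>(i, j). x i * y j)"

definition gamma_norm :: "(('a::finite) \<times> ('b::finite)) op \<Rightarrow> real" where
  "gamma_norm t = Inf {r. \<exists>(n::nat) (u::nat \<Rightarrow> 'a op) (v::nat \<Rightarrow> 'b op).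
       t = (\<lambda>x y. \<Sum>i<n. tensor_op (u i) (v i) x y) \<and>
       r = (\<Sum>i<n. trace_norm (u i) * trace_norm (v i))}"

definition proj :: "'a vec \<Rightarrow> 'a op" where
  "proj psi = (\<lambda>x y. psi x * cnj (psi y))"

end

theory Submission
  imports "HOL-Analysis.Analysis" Defs
begin

definition outer :: "'a vec \<Rightarrow> 'a vec \<Rightarrow> 'a op" where
  "outer a b = (\<lambda>x y. a x * cnj (b y))"
definition mv :: "('a::finite) op \<Rightarrow> 'a vec \<Rightarrow> 'a vec" where
  "mv M v = (\<lambda>i. \<Sum>j\<in>UNIV. M i j * v j)"
definition vnorm :: "('a::finite) vec \<Rightarrow> real" where
  "vnorm v = sqrt (Re (cinner v v))"

lemma cinner_sym: "cinner w v = cnj (cinner v w)"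
  unfolding cinner_def by (simp add: mult.commute)

lemma cinner_add_right: "cinner v (\<lambda>k. w k + x k) = cinner v w + cinner v x"
  unfolding cinner_def by (simp add: distrib_left sum.distrib)
lemma cinner_diff_right: "cinner v (\<lambda>k. w k - x k) = cinner v w - cinner v x"
  unfolding cinner_def by (simp add: right_diff_distrib sum_subtractf)
lemma cinner_scale_right: "cinner v (\<lambda>k. c * w k) = c * cinner v w"
  unfolding cinner_def by (simp add: sum_distrib_left algebra_simps)
lemma cinner_sum_right: "cinner v (\<lambda>k. \<Sum>i\<in>A. f i k) = (\<Sum>i\<in>A. cinner v (f i))"
  unfolding cinner_def by (simp add: sum_distrib_left) (rule sum.swap)
lemma cinner_add_left: "cinner (\<lambda>k. w k + x k) v = cinner w v + cinner x v"
  unfolding cinner_def by (simp add: distrib_right sum.distrib)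
lemma cinner_diff_left: "cinner (\<lambda>k. w k - x k) v = cinner w v - cinner x v"
  unfolding cinner_def by (simp add: left_diff_distrib sum_subtractf)
lemma cinner_scale_left: "cinner (\<lambda>k. c * w k) v = cnj c * cinner w v"
  unfolding cinner_def by (simp add: sum_distrib_left algebra_simps)
lemma cinner_sum_left: "cinner (\<lambda>k. \<Sum>i\<in>A. f i k) v = (\<Sum>i\<in>A. cinner (f i) v)"
  unfolding cinner_def by (simp add: sum_distrib_right cnj_sum) (rule sum.swap)

lemma cnj_mult_self: "cnj z * z = complex_of_real ((cmod z)^2)"
  by (metis complex_norm_square mult.commute of_real_power)
lemma cinner_self: "cinner v v = complex_of_real (\<Sum>k\<in>UNIV. (cmod (v k))^2)"
  unfolding cinner_def by (simp add: cnj_mult_self)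
lemma cinner_self_Re: "Re (cinner v v) = (\<Sum>k\<in>UNIV. (cmod (v k))^2)"
  by (simp add: cinner_self)
lemma cinner_self_ge0: "0 \<le> Re (cinner v v)"
  by (simp add: cinner_self_Re sum_nonneg)
lemma cinner_self_real: "cinner v v = complex_of_real (Re (cinner v v))"
  by (simp add: cinner_self)
lemma cinner_self_eq0: "cinner v v = 0 \<longleftrightarrow> v = (\<lambda>k. 0)"
proof
  assume "cinner v v = 0"
  then have "(\<Sum>k\<in>UNIV. (cmod (v k))^2) = 0" using cinner_self[of v] by (metis of_real_eq_0_iff)
  then have "\<forall>k\<in>UNIV. (cmod (v k))^2 = 0"
    using sum_nonneg_eq_0_iff[of UNIV "\<lambda>k. (cmod (v k))^2"] by simp
  then show "v = (\<lambda>k. 0)" by auto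
next
  assume "v = (\<lambda>k. 0)"
  then show "cinner v v = 0" unfolding cinner_def by simp
qed
lemma cinner_self_Re_eq0: "Re (cinner v v) = 0 \<longleftrightarrow> v = (\<lambda>k. 0)"
proof
  have e: "cinner v v = complex_of_real (Re (cinner v v))" by (rule cinner_self_real)
  assume "Re (cinner v v) = 0"
  then have "cinner v v = 0" using e by simp
  then show "v = (\<lambda>k. 0)" using cinner_self_eq0 by blast
next
  assume "v = (\<lambda>k. 0)"
  then show "Re (cinner v v) = 0" by (simp add: cinner_def)
qed
lemma vnorm_L2: "vnorm v = L2_set (\<lambda>k. cmod (v k)) UNIV"
  unfolding vnorm_def L2_set_def cinner_self_Re ..
lemma vnorm_ge0: "0 \<le> vnorm v" by (simp add: vnorm_def cinner_self_ge0)
lemma vnorm_sq: "(vnorm v)^2 = Re (cinner v v)"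
  by (simp add: vnorm_def cinner_self_ge0)

lemma cauchy_schwarz: "cmod (cinner a b) \<le> vnorm a * vnorm b"
proof -
  have "cmod (cinner a b) \<le> (\<Sum>k\<in>UNIV. cmod (cnj (a k) * b k))"
    unfolding cinner_def by (rule norm_sum)
  also have "\<dots> = (\<Sum>k\<in>UNIV. \<bar>cmod (a k)\<bar> * \<bar>cmod (b k)\<bar>)" by (simp add: norm_mult)
  also have "\<dots> \<le> L2_set (\<lambda>k. cmod (a k)) UNIV * L2_set (\<lambda>k. cmod (b k)) UNIV"
    by (rule L2_set_mult_ineq)
  finally show ?thesis by (simp add: vnorm_L2)
qed

lemma mv_adj: "cinner w (mv M v) = cinner (mv (adjoint M) w) v"
  unfolding cinner_def mv_def adjoint_def
  by (simp add: sum_distrib_left sum_distrib_right cnj_sum algebra_simps) (rule sum.swap)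

lemma mv_add: "mv M (\<lambda>k. v k + w k) = (\<lambda>k. mv M v k + mv M w k)"
  unfolding mv_def by (simp add: distrib_left sum.distrib)
lemma mv_diff: "mv M (\<lambda>k. v k - w k) = (\<lambda>k. mv M v k - mv M w k)"
  unfolding mv_def by (simp add: right_diff_distrib sum_subtractf)
lemma mv_scale: "mv M (\<lambda>k. c * v k) = (\<lambda>k. c * mv M v k)"
  unfolding mv_def by (simp add: sum_distrib_left algebra_simps)
lemma mv_sum: "mv M (\<lambda>k. \<Sum>i\<in>A. f i k) = (\<lambda>k. \<Sum>i\<in>A. mv M (f i) k)"
  unfolding mv_def by (simp add: sum_distrib_left) (rule ext, rule sum.swap)
lemma mv_mmult: "mv (mmult A B) v = mv A (mv B v)"
  unfolding mv_def mmult_def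
  by (simp add: sum_distrib_left sum_distrib_right algebra_simps) (rule ext, rule sum.swap)

lemma hermitian_iff: "adjoint M = M \<longleftrightarrow> (\<forall>i j. cnj (M j i) = M i j)"
  unfolding adjoint_def fun_eq_iff by (rule refl)
lemma hermD: "adjoint M = M \<Longrightarrow> M i j = cnj (M j i)"
  unfolding hermitian_iff by auto
lemma herm_mv: "adjoint M = M \<Longrightarrow> cinner w (mv M v) = cinner (mv M w) v"
  by (simp add: mv_adj)

lemma psd_iff: "psd s \<longleftrightarrow> adjoint s = s \<and> (\<forall>v. cinner v (mv s v) \<in> \<real> \<and> 0 \<le> Re (cinner v (mv s v)))"
proof -
  have "\<And>v. cinner v (mv s v) = (\<Sum>i\<in>UNIV. \<Sum>j\<in>UNIV. cnj (v i) * s i j * v j)"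
    unfolding cinner_def mv_def by (simp add: sum_distrib_left mult.assoc)
  then show ?thesis unfolding psd_def by simp
qed

lemma quad0:
  fixes a b :: real
  assumes H: "\<And>t. 0 \<le> a*t + b*t^2"
  shows "a = 0"
proof (rule ccontr)
  assume a0: "a \<noteq> 0"
  define c where "c = \<bar>b\<bar> + 1"
  have c0: "c > 0" by (simp add: c_def)
  define t where "t = - a / c"
  have "0 \<le> (a*t + b*t^2) * c^2" using H[of t] c0 by simp
  also have "(a*t + b*t^2) * c^2 = (-(a^2)) * c + b * a^2"
    using c0 by (simp add: t_def field_simps power2_eq_square)
  also have "\<dots> \<le> (-(a^2)) * c + \<bar>b\<bar> * a^2"
    by (simp add: mult_right_mono)
  also have "\<dots> = -(a^2)" by (simp add: c_def algebra_simps)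
  finally have "a^2 \<le> 0" by simp
  then show False using a0 by simp
qed

lemma qf_expand:
  fixes t :: real
  assumes "adjoint N = N"
  shows "Re (cinner (\<lambda>k. v k + complex_of_real t * w k) (mv N (\<lambda>k. v k + complex_of_real t * w k)))
     = Re (cinner v (mv N v)) + 2 * t * Re (cinner w (mv N v)) + t^2 * Re (cinner w (mv N w))"
proof -
  have h: "cinner v (mv N w) = cnj (cinner w (mv N v))"
    using herm_mv[OF assms, of v w] cinner_sym[of "mv N v" w] by simp
  have "cinner (\<lambda>k. v k + complex_of_real t * w k) (mv N (\<lambda>k. v k + complex_of_real t * w k))
    = cinner v (mv N v) + complex_of_real t * cinner v (mv N w) + complex_of_real t * cinner w (mv N v)
      + complex_of_real t * complex_of_real t * cinner w (mv N w)"
    by (simp add: mv_add mv_scale cinner_add_left cinner_add_right cinner_scale_left cinner_scale_right algebra_simps)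
  then show ?thesis by (simp add: h power2_eq_square algebra_simps)
qed

lemma form_zero:
  assumes "adjoint N = N"
    and "\<And>t::real. 0 \<le> Re (cinner (\<lambda>k. v k + complex_of_real t * w k) (mv N (\<lambda>k. v k + complex_of_real t * w k)))"
    and "Re (cinner v (mv N v)) = 0"
  shows "Re (cinner w (mv N v)) = 0"
proof -
  have "\<And>t. 0 \<le> (2 * Re (cinner w (mv N v))) * t + Re (cinner w (mv N w)) * t^2"
    using assms(2) unfolding qf_expand[OF assms(1)] assms(3) by (simp add: algebra_simps)
  then have "2 * Re (cinner w (mv N v)) = 0" by (rule quad0)
  then show ?thesis by simp
qed

lemma psd_kernel:
  assumes "psd s" and "Re (cinner v (mv s v)) = 0"
  shows "mv s v = (\<lambda>k. 0)"
proof -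
  have h: "adjoint s = s" using assms(1) psd_iff by blast
  have "Re (cinner (mv s v) (mv s v)) = 0"
    by (rule form_zero[OF h _ assms(2)]) (use assms(1) psd_iff in blast)
  then show ?thesis using cinner_self_Re_eq0 by blast
qed

definition onf :: "nat \<Rightarrow> (nat \<Rightarrow> ('a::finite) \<Rightarrow> complex) \<Rightarrow> bool" where
  "onf K w \<longleftrightarrow> (\<forall>j<K. \<forall>l<K. cinner (w j) (w l) = (if j = l then 1 else 0))"

definition onb_complete :: "nat \<Rightarrow> (nat \<Rightarrow> ('a::finite) \<Rightarrow> complex) \<Rightarrow> bool" where
  "onb_complete K w \<longleftrightarrow> (\<forall>x. x = (\<lambda>a. \<Sum>j<K. cinner (w j) x * w j a))"

lemma proj_orth:
  assumes "onf K w" "l < K"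
  shows "cinner (w l) (\<lambda>a. x a - (\<Sum>j<K. cinner (w j) x * w j a)) = 0"
proof -
  have "cinner (w l) (\<lambda>a. x a - (\<Sum>j<K. cinner (w j) x * w j a))
      = cinner (w l) x - (\<Sum>j<K. cinner (w j) x * cinner (w l) (w j))"
    by (simp add: cinner_diff_right cinner_sum_right cinner_scale_right)
  also have "(\<Sum>j<K. cinner (w j) x * cinner (w l) (w j)) = (\<Sum>j<K. cinner (w j) x * (if l = j then 1 else 0))"
    using assms unfolding onf_def by (intro sum.cong) auto
  also have "\<dots> = cinner (w l) x" using assms(2) by (simp add: if_distrib sum.delta cong: if_cong)
  finally show ?thesis by simp
qed

lemma bessel:
  assumes "onf K w"
  shows "(\<Sum>j<K. (cmod (cinner (w j) y))^2) \<le> Re (cinner y y)"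
proof -
  define c where "c j = cinner (w j) y" for j
  define r where "r = (\<lambda>a. y a - (\<Sum>j<K. c j * w j a))"
  have orth: "cinner (w l) r = 0" if "l < K" for l
    unfolding r_def c_def using proj_orth[OF assms that] .
  have "cinner r (\<lambda>a. \<Sum>j<K. c j * w j a) = (\<Sum>j<K. c j * cinner r (w j))"
    by (simp add: cinner_sum_right cinner_scale_right)
  also have "\<dots> = 0"
    using orth by (simp add: cinner_sym[of r] )
  finally have z: "cinner r (\<lambda>a. \<Sum>j<K. c j * w j a) = 0" .
  have "cinner r r = cinner r (\<lambda>a. y a - (\<Sum>j<K. c j * w j a))"
    by (simp only: r_def[symmetric])
  also have "\<dots> = cinner r y - cinner r (\<lambda>a. \<Sum>j<K. c j * w j a)"
    by (rule cinner_diff_right)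
  also have "\<dots> = cinner r y" using z by simp
  also have "\<dots> = cinner y y - (\<Sum>j<K. cnj (c j) * c j)"
    unfolding r_def by (simp add: cinner_diff_left cinner_sum_left cinner_scale_left c_def)
  finally have "Re (cinner r r) = Re (cinner y y) - (\<Sum>j<K. (cmod (c j))^2)"
    by (simp add: cnj_mult_self)
  then show ?thesis using cinner_self_ge0[of r] by (simp add: c_def)
qed

definition evec :: "('a::finite) \<Rightarrow> 'a \<Rightarrow> complex" where
  "evec a = (\<lambda>b. if b = a then 1 else 0)"

lemma cinner_evec: "cinner v (evec a) = cnj (v a)"
  unfolding cinner_def evec_def by (simp add: if_distrib sum.delta cong: if_cong)

lemma onf_bound:
  assumes "onf K (w :: nat \<Rightarrow> ('a::finite) \<Rightarrow> complex)"
  shows "K \<le> CARD('a)"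
proof -
  have "real K = (\<Sum>j<K. Re (cinner (w j) (w j)))"
    using assms unfolding onf_def by simp
  also have "\<dots> = (\<Sum>j<K. \<Sum>a\<in>UNIV. (cmod (w j a))^2)" by (simp add: cinner_self_Re)
  also have "\<dots> = (\<Sum>a\<in>UNIV. \<Sum>j<K. (cmod (cinner (w j) (evec a)))^2)"
    by (subst sum.swap) (simp add: cinner_evec)
  also have "\<dots> \<le> (\<Sum>a\<in>(UNIV::'a set). Re (cinner (evec a) (evec a)))"
    by (rule sum_mono) (rule bessel[OF assms])
  also have "\<dots> = (\<Sum>a\<in>(UNIV::'a set). 1)" by (simp only: cinner_evec) (simp add: evec_def)
  finally show ?thesis by simp
qed

lemma complete_mat:
  assumes "onb_complete K w"
  shows "(\<Sum>j<K. w j i * cnj (w j i')) = (if i = i' then 1 else 0)"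
proof -
  have "evec i' i = (\<Sum>j<K. cinner (w j) (evec i') * w j i)"
    using assms unfolding onb_complete_def by metis
  then have "evec i' i = (\<Sum>j<K. cnj (w j i') * w j i)" by (simp only: cinner_evec)
  then show ?thesis by (simp add: evec_def mult.commute)
qed

lemma complete_dec:
  assumes "onb_complete K w"
  shows "A i i' = (\<Sum>j<K. mv A (w j) i * cnj (w j i'))"
proof -
  have "A i i' = (\<Sum>k\<in>UNIV. A i k * (\<Sum>j<K. w j k * cnj (w j i')))"
    by (simp add: complete_mat[OF assms] if_distrib sum.delta cong: if_cong)
  also have "\<dots> = (\<Sum>j<K. mv A (w j) i * cnj (w j i'))"
    unfolding mv_def by (simp add: sum_distrib_left sum_distrib_right mult.assoc) (rule sum.swap)
  finally show ?thesis .
qed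

lemma cont_vec_nth [continuous_intros]: "continuous_on S f \<Longrightarrow> continuous_on S (\<lambda>x. f x $ i)"
  unfolding continuous_on_def by (auto intro: tendsto_vec_nth)

lemma norm_vnorm: "norm (x :: complex^'a) = vnorm (vec_nth x)"
  unfolding norm_vec_def vnorm_L2 by simp

lemma vnorm_scale: "vnorm (\<lambda>a. complex_of_real c * v a) = \<bar>c\<bar> * vnorm v"
proof -
  have "Re (cinner (\<lambda>a. complex_of_real c * v a) (\<lambda>a. complex_of_real c * v a)) = c^2 * Re (cinner v v)"
    by (simp add: cinner_scale_left cinner_scale_right power2_eq_square)
  then show ?thesis unfolding vnorm_def by (simp add: real_sqrt_mult)
qed

lemma qf_scale: "cinner (\<lambda>a. complex_of_real c * v a) (mv M (\<lambda>a. complex_of_real c * v a))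
   = complex_of_real (c^2) * cinner v (mv M v)"
  by (simp add: mv_scale cinner_scale_left cinner_scale_right power2_eq_square)

lemma vec_nth_lambda: "vec_nth (vec_lambda f) = f"
  by (rule ext) simp

lemma vnorm_pos: "v \<noteq> (\<lambda>a. 0) \<Longrightarrow> 0 < vnorm v"
  using vnorm_ge0[of v] cinner_self_Re_eq0[of v] unfolding vnorm_def by auto

lemma eigen_step:
  fixes M :: "('a::finite) op" and w :: "nat \<Rightarrow> 'a \<Rightarrow> complex"
  assumes herm: "adjoint M = M"
    and eig: "\<forall>j<k. mv M (w j) = (\<lambda>a. complex_of_real (lam j) * w j a)"
    and v0V: "\<forall>j<k. cinner (w j) v0 = 0" and v0: "v0 \<noteq> (\<lambda>a. 0)"
  shows "\<exists>v \<mu>. (\<forall>j<k. cinner (w j) v = 0) \<and> cinner v v = 1 \<and> mv M v = (\<lambda>a. complex_of_real \<mu> * v a)"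
proof -
  define inV where "inV y \<longleftrightarrow> (\<forall>j<k. cinner (w j) y = 0)" for y
  have inV_lin: "inV (\<lambda>a. y a + c * z a)" if "inV y" "inV z" for y z c
    using that unfolding inV_def by (simp add: cinner_add_right cinner_scale_right)
  have inV_M: "inV (mv M y)" if "inV y" for y
  proof -
    have "cinner (w j) (mv M y) = 0" if "j < k" for j
    proof -
      have "cinner (w j) (mv M y) = cinner (mv M (w j)) y" by (rule herm_mv[OF herm])
      also have "\<dots> = cnj (complex_of_real (lam j)) * cinner (w j) y"
        using eig that by (simp add: cinner_scale_left)
      also have "\<dots> = 0" using \<open>inV y\<close> that unfolding inV_def by simp
      finally show ?thesis .
    qed
    then show ?thesis unfolding inV_def by blast
  qed
  define C where "C = (\<Inter>j\<in>{..<k}. {x::complex^'a. cinner (w j) (vec_nth x) = 0})"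
  have "closed C" unfolding C_def cinner_def
    by (intro closed_INT ballI closed_Collect_eq continuous_intros)
  define S where "S = sphere (0::complex^'a) 1 \<inter> C"
  have "compact S" unfolding S_def using \<open>closed C\<close> by (intro compact_Int_closed compact_sphere)
  have memS: "x \<in> S \<longleftrightarrow> vnorm (vec_nth x) = 1 \<and> inV (vec_nth x)" for x
    unfolding S_def C_def inV_def by (auto simp: norm_vnorm)
  define n0 where "n0 = vnorm v0"
  have n0: "n0 > 0" unfolding n0_def using vnorm_pos[OF v0] .
  have "vec_lambda (\<lambda>a. complex_of_real (1/n0) * v0 a) \<in> S"
    unfolding memS vec_nth_lambda using n0 v0V
    by (simp only: vnorm_scale n0_def[symmetric] inV_def cinner_scale_right) simp
  then have "S \<noteq> {}" by blast
  define f where "f x = Re (cinner (vec_nth x) (mv M (vec_nth x)))" for x :: "complex^'a"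
  have "continuous_on S f" unfolding f_def cinner_def mv_def
    by (intro continuous_intros)
  obtain xm where xm: "xm \<in> S" and xmax: "\<forall>y\<in>S. f y \<le> f xm"
    using continuous_attains_sup[OF \<open>compact S\<close> \<open>S \<noteq> {}\<close> \<open>continuous_on S f\<close>] by blast
  define v where "v = vec_nth xm"
  define \<mu> where "\<mu> = f xm"
  have vV: "inV v" and vn: "vnorm v = 1" using xm unfolding memS v_def by auto
  have vv: "cinner v v = 1"
  proof -
    have "Re (cinner v v) = 1" using vn vnorm_sq[of v] by simp
    then show ?thesis using cinner_self_real[of v] by simp
  qed
  have bound: "Re (cinner y (mv M y)) \<le> \<mu> * Re (cinner y y)" if "inV y" for y
  proof (cases "y = (\<lambda>a. 0)")
    case True
    then show ?thesis by (simp add: cinner_def)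
  next
    case False
    define n where "n = vnorm y"
    have n: "n > 0" unfolding n_def using vnorm_pos[OF False] .
    define z where "z = vec_lambda (\<lambda>a. complex_of_real (1/n) * y a)"
    have zS: "z \<in> S" unfolding memS z_def vec_nth_lambda using n \<open>inV y\<close>
      by (simp only: vnorm_scale n_def[symmetric] inV_def cinner_scale_right) simp
    have "f z = (1/n)^2 * Re (cinner y (mv M y))"
      unfolding f_def z_def vec_nth_lambda qf_scale by simp
    moreover have "f z \<le> f xm" using xmax zS by blast
    ultimately have "(1/n)^2 * Re (cinner y (mv M y)) \<le> \<mu>" unfolding \<mu>_def by linarith
    then have "Re (cinner y (mv M y)) \<le> \<mu> * n^2" using n by (simp add: field_simps)
    moreover have "n^2 = Re (cinner y y)" unfolding n_def by (rule vnorm_sq)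
    ultimately show ?thesis by simp
  qed
  define N where "N = (\<lambda>i j. (if i = j then complex_of_real \<mu> else 0) - M i j)"
  have mvN: "mv N y = (\<lambda>a. complex_of_real \<mu> * y a - mv M y a)" for y
  proof (rule ext)
    fix a
    have "mv N y a = (\<Sum>j\<in>UNIV. (if a = j then complex_of_real \<mu> * y j else 0) - M a j * y j)"
      unfolding mv_def N_def by (intro sum.cong) (auto simp: left_diff_distrib)
    also have "\<dots> = complex_of_real \<mu> * y a - mv M y a"
      unfolding mv_def by (simp add: sum_subtractf)
    finally show "mv N y a = complex_of_real \<mu> * y a - mv M y a" .
  qed
  have hermN: "adjoint N = N"
    using herm unfolding hermitian_iff N_def by auto
  have qfN: "Re (cinner y (mv N y)) = \<mu> * Re (cinner y y) - Re (cinner y (mv M y))" for y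
    unfolding mvN by (simp add: cinner_diff_right cinner_scale_right)
  have "Re (cinner v (mv N v)) = 0" unfolding qfN vv
    by (simp add: \<mu>_def f_def v_def)
  moreover have "\<And>t::real. 0 \<le> Re (cinner (\<lambda>a. v a + complex_of_real t * mv N v a) (mv N (\<lambda>a. v a + complex_of_real t * mv N v a)))"
  proof -
    fix t :: real
    have "inV (mv N v)" unfolding mvN using inV_lin[OF vV inV_M[OF vV], of "-1"] vV
      unfolding inV_def by (simp add: cinner_diff_right cinner_scale_right)
    then have "inV (\<lambda>a. v a + complex_of_real t * mv N v a)" by (rule inV_lin[OF vV])
    then show "0 \<le> Re (cinner (\<lambda>a. v a + complex_of_real t * mv N v a) (mv N (\<lambda>a. v a + complex_of_real t * mv N v a)))"
      unfolding qfN using bound by simp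
  qed
  ultimately have "Re (cinner (mv N v) (mv N v)) = 0" using form_zero[OF hermN] by blast
  then have "mv N v = (\<lambda>a. 0)" using cinner_self_Re_eq0 by blast
  then have "mv M v = (\<lambda>a. complex_of_real \<mu> * v a)" unfolding mvN by (auto simp: fun_eq_iff)
  then show ?thesis using vV vv unfolding inV_def by blast
qed

lemma spectral:
  fixes M :: "('a::finite) op"
  assumes herm: "adjoint M = M"
  shows "\<exists>K w lam. onf K w \<and> onb_complete K w \<and> (\<forall>j<K. mv M (w j) = (\<lambda>a. complex_of_real (lam j) * w j a))"
proof -
  define eig where "eig K w lam \<longleftrightarrow> (\<forall>j<K. mv M (w j) = (\<lambda>a. complex_of_real (lam j) * w j a))"
    for K and w :: "nat \<Rightarrow> 'a \<Rightarrow> complex" and lam :: "nat \<Rightarrow> real"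
  have claim: "(\<exists>w lam. onf k w \<and> eig k w lam) \<or> (\<exists>K w lam. onf K w \<and> onb_complete K w \<and> eig K w lam)" for k
  proof (induction k)
    case 0
    then show ?case unfolding onf_def eig_def by auto
  next
    case (Suc k)
    show ?case
    proof (cases "\<exists>K w lam. onf K w \<and> onb_complete K w \<and> eig K w lam")
      case True
      then show ?thesis by blast
    next
      case False
      with Suc.IH obtain w lam where o: "onf k w" and e: "eig k w lam" by blast
      have "\<not> onb_complete k w" using False o e by blast
      then obtain x where x: "x \<noteq> (\<lambda>a. \<Sum>j<k. cinner (w j) x * w j a)"
        unfolding onb_complete_def by blast
      define v0 where "v0 = (\<lambda>a. x a - (\<Sum>j<k. cinner (w j) x * w j a))"
      have v0V: "\<forall>j<k. cinner (w j) v0 = 0" unfolding v0_def using proj_orth[OF o] by blast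
      have v0: "v0 \<noteq> (\<lambda>a. 0)"
      proof
        assume "v0 = (\<lambda>a. 0)"
        then have "\<And>a. x a - (\<Sum>j<k. cinner (w j) x * w j a) = 0" unfolding v0_def by metis
        then have "x = (\<lambda>a. \<Sum>j<k. cinner (w j) x * w j a)" by (auto simp: fun_eq_iff)
        then show False using x by blast
      qed
      obtain v \<mu> where vV: "\<forall>j<k. cinner (w j) v = 0" and vv: "cinner v v = 1"
        and ve: "mv M v = (\<lambda>a. complex_of_real \<mu> * v a)"
        using eigen_step[OF herm _ v0V v0, of lam] e unfolding eig_def by blast
      define w' where "w' = w(k := v)"
      define lam' where "lam' = lam(k := \<mu>)"
      have "onf (Suc k) w'"
        unfolding onf_def
      proof (intro allI impI)
        fix j l assume j: "j < Suc k" and l: "l < Suc k"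
        show "cinner (w' j) (w' l) = (if j = l then 1 else 0)"
        proof (cases "j = k"; cases "l = k")
          assume "j = k" "l = k" then show ?thesis using vv by (simp add: w'_def)
        next
          assume "j = k" "l \<noteq> k"
          then have "l < k" using l by simp
          then show ?thesis using \<open>j = k\<close> \<open>l \<noteq> k\<close> vV cinner_sym[of v "w l"] by (simp add: w'_def)
        next
          assume "j \<noteq> k" "l = k"
          then have "j < k" using j by simp
          then show ?thesis using \<open>j \<noteq> k\<close> \<open>l = k\<close> vV by (simp add: w'_def)
        next
          assume "j \<noteq> k" "l \<noteq> k"
          then have "j < k" "l < k" using j l by simp_all
          then show ?thesis using \<open>j \<noteq> k\<close> \<open>l \<noteq> k\<close> o unfolding onf_def by (simp add: w'_def)
        qed
      qed
      moreover have "eig (Suc k) w' lam'"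
        unfolding eig_def
      proof (intro allI impI)
        fix j assume j: "j < Suc k"
        show "mv M (w' j) = (\<lambda>a. complex_of_real (lam' j) * w' j a)"
        proof (cases "j = k")
          case True then show ?thesis using ve by (simp add: w'_def lam'_def)
        next
          case False then have "j < k" using j by simp
          then show ?thesis using False e unfolding eig_def by (simp add: w'_def lam'_def)
        qed
      qed
      ultimately show ?thesis by blast
    qed
  qed
  have "\<not> (\<exists>w lam. onf (Suc CARD('a)) w \<and> eig (Suc CARD('a)) w lam)"
    using onf_bound[where 'a='a] by fastforce
  then show ?thesis using claim[of "Suc CARD('a)"] unfolding eig_def by blast
qed

lemma psd_herm: "psd s \<Longrightarrow> adjoint s = s" by (simp add: psd_iff)
lemma psd_form: "psd s \<Longrightarrow> 0 \<le> Re (cinner v (mv s v))" by (simp add: psd_iff)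

lemma psd_unique:
  assumes s: "psd s" and t: "psd t" and st: "mmult s s = mmult t t"
  shows "s = t"
proof -
  obtain K w lam where o: "onf K w" and c: "onb_complete K w"
    and e: "\<forall>j<K. mv t (w j) = (\<lambda>a. complex_of_real (lam j) * w j a)"
    using spectral[OF psd_herm[OF t]] by blast
  have key: "mv s (w j) = mv t (w j)" if j: "j < K" for j
  proof -
    define m where "m = lam j"
    define ww where "ww = w j"
    have tw: "mv t ww = (\<lambda>a. complex_of_real m * ww a)" using e j unfolding m_def ww_def by blast
    have wwn: "cinner ww ww = 1" using o j unfolding onf_def ww_def by simp
    have "Re (cinner ww (mv t ww)) = m" unfolding tw by (simp add: cinner_scale_right wwn)
    then have m0: "m \<ge> 0" using psd_form[OF t, of ww] by simp
    define y where "y = (\<lambda>a. mv s ww a - complex_of_real m * ww a)"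
    have ssw: "mv s (mv s ww) = (\<lambda>a. complex_of_real (m*m) * ww a)"
    proof -
      have "mv s (mv s ww) = mv (mmult s s) ww" by (simp add: mv_mmult)
      also have "\<dots> = mv t (mv t ww)" by (simp add: st mv_mmult)
      also have "\<dots> = (\<lambda>a. complex_of_real (m*m) * ww a)" unfolding tw mv_scale by (simp add: tw fun_eq_iff mult.assoc)
      finally show ?thesis .
    qed
    have sy: "mv s y = (\<lambda>a. complex_of_real (- m) * y a)"
      unfolding y_def mv_diff mv_scale ssw by (simp add: fun_eq_iff algebra_simps)
    have "Re (cinner y (mv s y)) = - m * Re (cinner y y)"
      unfolding sy cinner_scale_right by simp
    moreover have "0 \<le> m * Re (cinner y y)" using m0 cinner_self_ge0[of y] by simp
    ultimately have "Re (cinner y (mv s y)) = 0" using psd_form[OF s, of y] by linarith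
    then have sy0: "mv s y = (\<lambda>a. 0)" by (rule psd_kernel[OF s])
    have y0: "y = (\<lambda>a. 0)"
    proof (cases "m = 0")
      case False
      then show ?thesis using sy0 unfolding sy by (auto simp: fun_eq_iff)
    next
      case True
      then have yy: "y = mv s ww" unfolding y_def by simp
      have "cinner (mv s ww) (mv s ww) = cinner ww (mv s (mv s ww))"
        by (rule herm_mv[OF psd_herm[OF s], symmetric])
      also have "\<dots> = 0" using sy0 unfolding yy by (simp add: cinner_def)
      finally show ?thesis unfolding yy using cinner_self_eq0 by blast
    qed
    then show ?thesis unfolding y_def tw[folded ww_def] ww_def[symmetric]
      by (auto simp: fun_eq_iff)
  qed
  show ?thesis
  proof (rule ext, rule ext)
    fix i i'
    have "s i i' = (\<Sum>j<K. mv s (w j) i * cnj (w j i'))" by (rule complete_dec[OF c])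
    also have "\<dots> = (\<Sum>j<K. mv t (w j) i * cnj (w j i'))" using key by simp
    also have "\<dots> = t i i'" by (rule complete_dec[OF c, symmetric])
    finally show "s i i' = t i i'" .
  qed
qed

lemma trace_norm_eq:
  assumes "psd s" "mmult s s = mmult (adjoint x) x"
  shows "trace_norm x = Re (trace s)"
proof -
  have "(THE s. psd s \<and> mmult s s = mmult (adjoint x) x) = s"
  proof (rule the_equality)
    show "psd s \<and> mmult s s = mmult (adjoint x) x" using assms by simp
    fix s' assume "psd s' \<and> mmult s' s' = mmult (adjoint x) x"
    then show "s' = s" using psd_unique[of s' s] assms by simp
  qed
  then show ?thesis unfolding trace_norm_def by simp
qed

lemma mv_specmat:
  "mv (\<lambda>i i'. \<Sum>j<K. c j * w j i * cnj (w j i')) v = (\<lambda>i. \<Sum>j<K. c j * cinner (w j) v * w j i)"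
proof (rule ext)
  fix i
  have "mv (\<lambda>i i'. \<Sum>j<K. c j * w j i * cnj (w j i')) v i
      = (\<Sum>i'\<in>UNIV. \<Sum>j<K. c j * w j i * (cnj (w j i') * v i'))"
    unfolding mv_def by (simp add: sum_distrib_right mult.assoc)
  also have "\<dots> = (\<Sum>j<K. \<Sum>i'\<in>UNIV. c j * w j i * (cnj (w j i') * v i'))" by (rule sum.swap)
  also have "\<dots> = (\<Sum>j<K. c j * cinner (w j) v * w j i)"
    unfolding cinner_def by (simp add: sum_distrib_left mult.commute mult.left_commute)
  finally show "mv (\<lambda>i i'. \<Sum>j<K. c j * w j i * cnj (w j i')) v i = (\<Sum>j<K. c j * cinner (w j) v * w j i)" .
qed

lemma mv_specmat_w:
  assumes "onf K w" "l < K"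
  shows "mv (\<lambda>i i'. \<Sum>j<K. c j * w j i * cnj (w j i')) (w l) = (\<lambda>i. c l * w l i)"
proof -
  have "(\<Sum>j<K. c j * cinner (w j) (w l) * w j i) = c l * w l i" for i
  proof -
    have "(\<Sum>j<K. c j * cinner (w j) (w l) * w j i) = (\<Sum>j<K. if j = l then c j * w j i else 0)"
      using assms unfolding onf_def by (intro sum.cong) auto
    also have "\<dots> = c l * w l i" using assms(2) by (simp add: sum.delta)
    finally show ?thesis .
  qed
  then show ?thesis unfolding mv_specmat by simp
qed

lemma qf_specmat:
  "cinner v (mv (\<lambda>i i'. \<Sum>j<K. complex_of_real (c j) * w j i * cnj (w j i')) v)
    = complex_of_real (\<Sum>j<K. c j * (cmod (cinner (w j) v))^2)"
proof -
  have "cinner v (mv (\<lambda>i i'. \<Sum>j<K. complex_of_real (c j) * w j i * cnj (w j i')) v)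
     = (\<Sum>j<K. complex_of_real (c j) * cinner (w j) v * cinner v (w j))"
    unfolding mv_specmat cinner_sum_right cinner_scale_right by simp
  also have "\<dots> = (\<Sum>j<K. complex_of_real (c j) * (cnj (cinner (w j) v) * cinner (w j) v))"
    by (intro sum.cong refl) (simp add: cinner_sym[of v] mult.commute)
  also have "\<dots> = complex_of_real (\<Sum>j<K. c j * (cmod (cinner (w j) v))^2)"
    by (simp add: cnj_mult_self)
  finally show ?thesis .
qed

lemma psd_specmat:
  assumes "\<And>j. j < K \<Longrightarrow> c j \<ge> 0"
  shows "psd (\<lambda>i i'. \<Sum>j<K. complex_of_real (c j) * w j i * cnj (w j i'))"
  unfolding psd_iff
proof (intro conjI allI)
  show "adjoint (\<lambda>i i'. \<Sum>j<K. complex_of_real (c j) * w j i * cnj (w j i')) =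
    (\<lambda>i i'. \<Sum>j<K. complex_of_real (c j) * w j i * cnj (w j i'))"
    unfolding adjoint_def by (simp add: mult.commute mult.left_commute)
  fix v
  show "cinner v (mv (\<lambda>i i'. \<Sum>j<K. complex_of_real (c j) * w j i * cnj (w j i')) v) \<in> \<real>"
    unfolding qf_specmat by simp
  show "0 \<le> Re (cinner v (mv (\<lambda>i i'. \<Sum>j<K. complex_of_real (c j) * w j i * cnj (w j i')) v))"
    unfolding qf_specmat using assms by (auto intro!: sum_nonneg)
qed

lemma adj_adj: "adjoint (adjoint u) = u"
  unfolding adjoint_def by simp

lemma herm_gram: "adjoint (mmult (adjoint u) u) = mmult (adjoint u) u"
  unfolding adjoint_def mmult_def by (simp add: mult.commute)

lemma tn_decomp:
  fixes u :: "('a::finite) op"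
  shows "\<exists>(K::nat) a b. (\<forall>i i'. u i i' = (\<Sum>l<K. a l i * cnj (b l i')))
             \<and> trace_norm u = (\<Sum>l<K. vnorm (a l) * vnorm (b l))"
proof -
  define M where "M = mmult (adjoint u) u"
  obtain K w lam where o: "onf K w" and c: "onb_complete K w"
    and e: "\<forall>j<K. mv M (w j) = (\<lambda>a. complex_of_real (lam j) * w j a)"
    using spectral[OF herm_gram[of u, folded M_def]] by blast
  have wn: "cinner (w j) (w j) = 1" if "j < K" for j using o that unfolding onf_def by simp
  have lamR: "lam j = Re (cinner (mv u (w j)) (mv u (w j)))" if j: "j < K" for j
  proof -
    have "cinner (w j) (mv M (w j)) = cinner (mv u (w j)) (mv u (w j))"
      unfolding M_def mv_mmult mv_adj adj_adj ..
    moreover have "cinner (w j) (mv M (w j)) = complex_of_real (lam j)"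
      using e j wn by (simp add: cinner_scale_right)
    ultimately show ?thesis by (metis Re_complex_of_real)
  qed
  have lam0: "lam j \<ge> 0" if "j < K" for j using lamR[OF that] cinner_self_ge0 by simp
  have vn: "vnorm (mv u (w j)) = sqrt (lam j)" if "j < K" for j
    unfolding vnorm_def lamR[OF that] ..
  have vw: "vnorm (w j) = 1" if "j < K" for j unfolding vnorm_def using wn[OF that] by simp
  define s where "s = (\<lambda>i i'. \<Sum>j<K. complex_of_real (sqrt (lam j)) * w j i * cnj (w j i'))"
  have ps: "psd s" unfolding s_def by (rule psd_specmat) (simp add: lam0)
  have ss: "mmult s s = M"
  proof (rule ext, rule ext)
    fix i i'
    have "mmult s s i i' = (\<Sum>j<K. mv (mmult s s) (w j) i * cnj (w j i'))" by (rule complete_dec[OF c])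
    also have "\<dots> = (\<Sum>j<K. mv M (w j) i * cnj (w j i'))"
    proof (intro sum.cong refl)
      fix j assume "j \<in> {..<K}"
      then have j: "j < K" by simp
      have "mv (mmult s s) (w j) = mv s (mv s (w j))" by (rule mv_mmult)
      also have "\<dots> = (\<lambda>a. complex_of_real (sqrt (lam j)) * (complex_of_real (sqrt (lam j)) * w j a))"
        unfolding s_def mv_specmat_w[OF o j] mv_scale by simp
      also have "\<dots> = mv M (w j)" using e j lam0[OF j]
        by (simp add: fun_eq_iff mult.assoc[symmetric] of_real_mult[symmetric])
      finally show "mv (mmult s s) (w j) i * cnj (w j i') = mv M (w j) i * cnj (w j i')" by simp
    qed
    also have "\<dots> = M i i'" by (rule complete_dec[OF c, symmetric])
    finally show "mmult s s i i' = M i i'" .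
  qed
  have tr: "Re (trace s) = (\<Sum>j<K. sqrt (lam j))"
  proof -
    have "trace s = (\<Sum>j<K. complex_of_real (sqrt (lam j)) * cinner (w j) (w j))"
      unfolding trace_def s_def cinner_def
      by (subst sum.swap) (simp add: sum_distrib_left mult.commute mult.left_commute)
    also have "\<dots> = (\<Sum>j<K. complex_of_real (sqrt (lam j)))" using wn by simp
    finally show ?thesis by simp
  qed
  have "trace_norm u = (\<Sum>j<K. sqrt (lam j))"
    using trace_norm_eq[OF ps ss[unfolded M_def]] tr by simp
  also have "\<dots> = (\<Sum>l<K. vnorm (mv u (w l)) * vnorm (w l))" using vn vw by simp
  finally have "trace_norm u = (\<Sum>l<K. vnorm (mv u (w l)) * vnorm (w l))" .
  moreover have "\<forall>i i'. u i i' = (\<Sum>l<K. mv u (w l) i * cnj (w l i'))"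
    using complete_dec[OF c] by blast
  ultimately have "(\<forall>i i'. u i i' = (\<Sum>l<K. (\<lambda>l. mv u (w l)) l i * cnj (w l i')))
             \<and> trace_norm u = (\<Sum>l<K. vnorm ((\<lambda>l. mv u (w l)) l) * vnorm (w l))" by simp
  then show ?thesis
    apply (rule_tac x=K in exI)
    apply (rule_tac x="\<lambda>l. mv u (w l)" in exI)
    apply (rule_tac x=w in exI)
    by simp
qed

lemma tn_outer: "trace_norm (outer a b) = vnorm a * vnorm b"
proof -
  define na where "na = vnorm a"
  define nb where "nb = vnorm b"
  define c where "c = na / nb"
  have bb: "cinner b b = complex_of_real (nb^2)" unfolding nb_def vnorm_sq by (rule cinner_self_real)
  have aa: "cinner a a = complex_of_real (na^2)" unfolding na_def vnorm_sq by (rule cinner_self_real)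
  define s where "s = (\<lambda>i i'. \<Sum>j<(1::nat). complex_of_real c * b i * cnj (b i'))"
  have ps: "psd s" unfolding s_def c_def na_def nb_def
    by (rule psd_specmat[where c="\<lambda>_. vnorm a / vnorm b" and w="\<lambda>_. b"]) (simp add: vnorm_ge0)
  have ss: "mmult s s = mmult (adjoint (outer a b)) (outer a b)"
  proof (rule ext, rule ext)
    fix i i'
    have "mmult s s i i' = complex_of_real c * complex_of_real c * cinner b b * (b i * cnj (b i'))"
      unfolding mmult_def s_def cinner_def by (simp add: sum_distrib_left sum_distrib_right mult.commute mult.left_commute)
    also have "\<dots> = cinner a a * (b i * cnj (b i'))"
    proof (cases "nb = 0")
      case True
      then have "cinner b b = 0" using bb by simp
      then have "b = (\<lambda>k. 0)" using cinner_self_eq0 by blast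
      then show ?thesis by simp
    next
      case False
      then show ?thesis unfolding bb aa c_def by (simp add: field_simps power2_eq_square flip: of_real_mult)
    qed
    also have "\<dots> = mmult (adjoint (outer a b)) (outer a b) i i'"
      unfolding mmult_def adjoint_def outer_def cinner_def
      by (simp add: sum_distrib_left sum_distrib_right mult.commute mult.left_commute)
    finally show "mmult s s i i' = mmult (adjoint (outer a b)) (outer a b) i i'" .
  qed
  have "trace s = complex_of_real c * cinner b b"
    unfolding trace_def s_def cinner_def by (simp add: sum_distrib_left mult.commute mult.left_commute)
  then have "Re (trace s) = na * nb"
    unfolding bb c_def by (cases "nb = 0") (simp_all add: power2_eq_square)
  then show ?thesis using trace_norm_eq[OF ps ss] unfolding na_def nb_def by simp
qed

lemma onb_vnorm: "orthonormal_basis e \<Longrightarrow> vnorm (e i) = 1"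
  unfolding orthonormal_basis_def vnorm_def by simp

lemma onb_inner: "orthonormal_basis e \<Longrightarrow> cinner (e i) (e j) = (if i = j then 1 else 0)"
  unfolding orthonormal_basis_def by simp

lemma parseval:
  fixes e :: "'i::finite \<Rightarrow> ('a::finite) \<Rightarrow> complex"
  assumes onb: "orthonormal_basis e"
  shows "(\<Sum>i\<in>UNIV. (cmod (cinner (e i) x))^2) = Re (cinner x x)"
proof -
  obtain c F where F: "finite F" and x: "x = (\<lambda>k. \<Sum>i\<in>F. c i * e i k)"
    using onb unfolding orthonormal_basis_def by blast
  define c' where "c' i = (if i \<in> F then c i else 0)" for i
  have x': "x = (\<lambda>k. \<Sum>i\<in>UNIV. c' i * e i k)"
  proof (rule ext)
    fix k
    have "(\<Sum>i\<in>UNIV. c' i * e i k) = (\<Sum>i\<in>UNIV. if i \<in> F then c i * e i k else 0)"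
      unfolding c'_def by (intro sum.cong) auto
    also have "\<dots> = (\<Sum>i\<in>UNIV \<inter> F. c i * e i k)" by (rule sum.inter_restrict[symmetric]) simp
    finally show "x k = (\<Sum>i\<in>UNIV. c' i * e i k)" unfolding x by simp
  qed
  have coef: "cinner (e j) x = c' j" for j
  proof -
    have "cinner (e j) x = (\<Sum>i\<in>UNIV. c' i * cinner (e j) (e i))"
      by (subst x') (simp add: cinner_sum_right cinner_scale_right)
    also have "\<dots> = (\<Sum>i\<in>UNIV. if i = j then c' i else 0)"
      using onb_inner[OF onb] by (intro sum.cong) auto
    also have "\<dots> = c' j" by simp
    finally show ?thesis .
  qed
  have "cinner x x = (\<Sum>i\<in>UNIV. cnj (c' i) * cinner (e i) x)"
    by (subst (1) x') (simp add: cinner_sum_left cinner_scale_left)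
  also have "\<dots> = (\<Sum>i\<in>UNIV. complex_of_real ((cmod (c' i))^2))" by (simp add: coef cnj_mult_self)
  finally show ?thesis by (simp add: coef)
qed

lemma sum_pair: "(\<Sum>z\<in>(UNIV::('a::finite \<times> 'b::finite) set). f z) = (\<Sum>x\<in>UNIV. \<Sum>y\<in>UNIV. f (x, y))"
  by (simp add: sum.cartesian_product UNIV_Times_UNIV[symmetric] del: UNIV_Times_UNIV)

lemma cinner_tensor: "cinner (tensor_vec a c) (tensor_vec b d) = cinner a b * cinner c d"
  unfolding cinner_def tensor_vec_def sum_pair
  by (simp add: sum_product mult.commute mult.left_commute)

lemma tensor_outer: "tensor_op (outer a b) (outer c d) = outer (tensor_vec a c) (tensor_vec b d)"
  by (auto simp: fun_eq_iff tensor_op_def outer_def tensor_vec_def)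

lemma mv_sum_mat: "mv (\<lambda>z z'. \<Sum>l\<in>A. X l z z') v = (\<lambda>z. \<Sum>l\<in>A. mv (X l) v z)"
  unfolding mv_def by (simp add: sum_distrib_right) (rule ext, rule sum.swap)

lemma L_outer: "cinner W (mv (outer x y) W) = cinner W x * cinner y W"
proof -
  have "mv (outer x y) W = (\<lambda>z. cinner y W * x z)"
    unfolding mv_def outer_def cinner_def by (simp add: sum_distrib_left mult.commute mult.left_commute)
  then have "cinner W (mv (outer x y) W) = cinner y W * cinner W x" by (simp only: cinner_scale_right)
  then show ?thesis by (simp add: mult.commute)
qed

lemma omega_bound:
  fixes phi :: "'i::finite \<Rightarrow> ('a::finite) \<Rightarrow> complex" and chi :: "'i \<Rightarrow> ('b::finite) \<Rightarrow> complex"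
  assumes "orthonormal_basis phi" "orthonormal_basis chi"
  shows "cmod (cinner (\<lambda>z. \<Sum>i\<in>UNIV. tensor_vec (phi i) (chi i) z) (tensor_vec a c)) \<le> vnorm a * vnorm c"
proof -
  have "cinner (\<lambda>z. \<Sum>i\<in>UNIV. tensor_vec (phi i) (chi i) z) (tensor_vec a c)
       = (\<Sum>i\<in>UNIV. cinner (phi i) a * cinner (chi i) c)"
    by (simp add: cinner_sum_left cinner_tensor)
  also have "cmod \<dots> \<le> (\<Sum>i\<in>UNIV. \<bar>cmod (cinner (phi i) a)\<bar> * \<bar>cmod (cinner (chi i) c)\<bar>)"
    by (rule order_trans[OF norm_sum]) (simp add: norm_mult)
  also have "\<dots> \<le> L2_set (\<lambda>i. cmod (cinner (phi i) a)) UNIV * L2_set (\<lambda>i. cmod (cinner (chi i) c)) UNIV"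
    by (rule L2_set_mult_ineq)
  also have "\<dots> = vnorm a * vnorm c"
    unfolding L2_set_def vnorm_def parseval[OF assms(1)] parseval[OF assms(2)] ..
  finally show ?thesis .
qed

lemma L_tensor_bound:
  fixes phi :: "'i::finite \<Rightarrow> ('a::finite) \<Rightarrow> complex" and chi :: "'i \<Rightarrow> ('b::finite) \<Rightarrow> complex"
    and u :: "'a op" and v :: "'b op"
  assumes onb1: "orthonormal_basis phi" and onb2: "orthonormal_basis chi"
  shows "cmod (cinner (\<lambda>z. \<Sum>i\<in>UNIV. tensor_vec (phi i) (chi i) z)
            (mv (tensor_op u v) (\<lambda>z. \<Sum>i\<in>UNIV. tensor_vec (phi i) (chi i) z)))
         \<le> trace_norm u * trace_norm v"
proof -
  define Om where "Om = (\<lambda>z. \<Sum>i\<in>UNIV. tensor_vec (phi i) (chi i) z)"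
  obtain K :: nat and a b where u: "\<forall>i i'. u i i' = (\<Sum>l<K. a l i * cnj (b l i'))"
    and tu: "trace_norm u = (\<Sum>l<K. vnorm (a l) * vnorm (b l))"
    using tn_decomp[of u] by blast
  obtain K' :: nat and c d where v: "\<forall>i i'. v i i' = (\<Sum>l<K'. c l i * cnj (d l i'))"
    and tv: "trace_norm v = (\<Sum>l<K'. vnorm (c l) * vnorm (d l))"
    using tn_decomp[of v] by blast
  have bnd: "cmod (cinner Om (tensor_vec x y)) \<le> vnorm x * vnorm y" for x y
    unfolding Om_def by (rule omega_bound[OF onb1 onb2])
  have bnd2: "cmod (cinner (tensor_vec x y) Om) \<le> vnorm x * vnorm y" for x y
    using bnd[of x y] cinner_sym[of "tensor_vec x y" Om] by simp
  have tuv: "tensor_op u v = (\<lambda>z z'. \<Sum>l<K. \<Sum>m<K'. outer (tensor_vec (a l) (c m)) (tensor_vec (b l) (d m)) z z')"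
    by (auto simp: fun_eq_iff tensor_op_def outer_def tensor_vec_def u v sum_product mult.commute mult.left_commute)
  have "cinner Om (mv (tensor_op u v) Om)
      = (\<Sum>l<K. \<Sum>m<K'. cinner Om (mv (outer (tensor_vec (a l) (c m)) (tensor_vec (b l) (d m))) Om))"
    unfolding tuv mv_sum_mat cinner_sum_right ..
  also have "\<dots> = (\<Sum>l<K. \<Sum>m<K'. cinner Om (tensor_vec (a l) (c m)) * cinner (tensor_vec (b l) (d m)) Om)"
    unfolding L_outer ..
  finally have eq: "cinner Om (mv (tensor_op u v) Om) = \<dots>" .
  have "cmod (cinner Om (mv (tensor_op u v) Om))
      \<le> (\<Sum>l<K. \<Sum>m<K'. cmod (cinner Om (tensor_vec (a l) (c m)) * cinner (tensor_vec (b l) (d m)) Om))"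
    unfolding eq by (rule order_trans[OF norm_sum], rule sum_mono, rule norm_sum)
  also have "\<dots> \<le> (\<Sum>l<K. \<Sum>m<K'. (vnorm (a l) * vnorm (c m)) * (vnorm (b l) * vnorm (d m)))"
    unfolding norm_mult
    by (intro sum_mono mult_mono bnd bnd2 mult_nonneg_nonneg vnorm_ge0 norm_ge_zero)
  also have "\<dots> = (\<Sum>l<K. vnorm (a l) * vnorm (b l)) * (\<Sum>m<K'. vnorm (c m) * vnorm (d m))"
    by (simp add: sum_product mult.commute mult.left_commute)
  finally show ?thesis unfolding tu tv Om_def .
qed

theorem proposition4:
  fixes phi :: "'i::finite \<Rightarrow> ('a::finite) vec"
    and chi :: "'i \<Rightarrow> ('b::finite) vec"
    and p :: "'i \<Rightarrow> real"
    and psi :: "('a \<times> 'b) vec"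
  assumes "orthonormal_basis phi" and "orthonormal_basis chi"
    and "\<And>i. p i \<ge> 0" and "(\<Sum>i\<in>UNIV. p i) = 1"
    and "psi = (\<lambda>z. \<Sum>i\<in>UNIV. complex_of_real (sqrt (p i)) * tensor_vec (phi i) (chi i) z)"
    and "cinner psi psi = 1"
  shows "gamma_norm (proj psi) = (\<Sum>i\<in>UNIV. \<Sum>j\<in>UNIV. sqrt (p i * p j))
     \<and> (\<Sum>i\<in>UNIV. \<Sum>j\<in>UNIV. sqrt (p i * p j)) = (\<Sum>i\<in>UNIV. sqrt (p i))^2"
proof -
  note onb1 = assms(1) and onb2 = assms(2) and p0 = assms(3) and psi = assms(5)
  define S where "S = (\<Sum>i\<in>UNIV. \<Sum>j\<in>UNIV. sqrt (p i * p j))"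
  have S2: "S = (\<Sum>i\<in>UNIV. sqrt (p i))^2"
    unfolding S_def by (simp add: power2_eq_square sum_product real_sqrt_mult)
  have S0: "S \<ge> 0" unfolding S2 by simp
  define Om where "Om = (\<lambda>z. \<Sum>i\<in>UNIV. tensor_vec (phi i) (chi i) z)"
  have tt: "cinner (tensor_vec (phi j) (chi j)) (tensor_vec (phi i) (chi i)) = (if j = i then 1 else 0)" for i j
    unfolding cinner_tensor onb_inner[OF onb1] onb_inner[OF onb2] by simp
  have Omt: "cinner Om (tensor_vec (phi i) (chi i)) = 1" for i
    unfolding Om_def cinner_sum_left tt by simp
  have Ompsi: "cinner Om psi = complex_of_real (\<Sum>i\<in>UNIV. sqrt (p i))"
    unfolding psi cinner_sum_right cinner_scale_right Omt by simp
  have psiOm: "cinner psi Om = complex_of_real (\<Sum>i\<in>UNIV. sqrt (p i))"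
    using Ompsi cinner_sym[of psi Om] by simp
  have projo: "proj psi = outer psi psi" unfolding proj_def outer_def ..
  have Lpsi: "cinner Om (mv (proj psi) Om) = complex_of_real S"
    unfolding projo L_outer Ompsi psiOm S2 by (simp add: power2_eq_square)
  define R where "R = {r. \<exists>(n::nat) (u::nat \<Rightarrow> 'a op) (v::nat \<Rightarrow> 'b op).
       proj psi = (\<lambda>x y. \<Sum>i<n. tensor_op (u i) (v i) x y) \<and>
       r = (\<Sum>i<n. trace_norm (u i) * trace_norm (v i))}"
  have lb: "S \<le> r" if rR: "r \<in> R" for r
  proof -
    obtain n :: nat and u :: "nat \<Rightarrow> 'a op" and v :: "nat \<Rightarrow> 'b op"
      where d: "proj psi = (\<lambda>x y. \<Sum>i<n. tensor_op (u i) (v i) x y)"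
        and r: "r = (\<Sum>i<n. trace_norm (u i) * trace_norm (v i))"
      using rR unfolding R_def by blast
    have "complex_of_real S = (\<Sum>i<n. cinner Om (mv (tensor_op (u i) (v i)) Om))"
      unfolding Lpsi[symmetric] d mv_sum_mat cinner_sum_right ..
    then have "S = cmod (\<Sum>i<n. cinner Om (mv (tensor_op (u i) (v i)) Om))"
      using S0 by (metis norm_of_real abs_of_nonneg)
    also have "\<dots> \<le> (\<Sum>i<n. cmod (cinner Om (mv (tensor_op (u i) (v i)) Om)))" by (rule norm_sum)
    also have "\<dots> \<le> (\<Sum>i<n. trace_norm (u i) * trace_norm (v i))"
      unfolding Om_def by (intro sum_mono L_tensor_bound[OF onb1 onb2])
    finally show ?thesis unfolding r .
  qed
  obtain g where g: "bij_betw g {..<CARD('i \<times> 'i)} (UNIV :: ('i \<times> 'i) set)"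
    using ex_bij_betw_nat_finite[of "UNIV :: ('i \<times> 'i) set"] by (auto simp: lessThan_atLeast0)
  define n where "n = CARD('i \<times> 'i)"
  have reidx: "(\<Sum>m<n. F (g m)) = (\<Sum>i\<in>UNIV. \<Sum>j\<in>UNIV. F (i, j))" for F :: "'i \<times> 'i \<Rightarrow> 'c::comm_monoid_add"
    unfolding n_def sum.reindex_bij_betw[OF g] sum_pair ..
  define sp where "sp i = complex_of_real (sqrt (p i))" for i
  define U where "U m = outer (\<lambda>k. sp (fst (g m)) * phi (fst (g m)) k) (\<lambda>k. sp (snd (g m)) * phi (snd (g m)) k)" for m
  define V where "V m = outer (chi (fst (g m))) (chi (snd (g m)))" for m
  have tvs: "tensor_vec (\<lambda>k. c * f k) h = (\<lambda>z. c * tensor_vec f h z)" for c f h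
    by (auto simp: fun_eq_iff tensor_vec_def)
  have dec: "proj psi = (\<lambda>x y. \<Sum>m<n. tensor_op (U m) (V m) x y)"
  proof (intro ext)
    fix x y
    have "proj psi x y = (\<Sum>i\<in>UNIV. \<Sum>j\<in>UNIV.
        sp i * tensor_vec (phi i) (chi i) x * cnj (sp j * tensor_vec (phi j) (chi j) y))"
      unfolding proj_def psi sp_def by (simp add: sum_product cnj_sum)
    also have "\<dots> = (\<Sum>m<n. (\<lambda>(i, j). sp i * tensor_vec (phi i) (chi i) x * cnj (sp j * tensor_vec (phi j) (chi j) y)) (g m))"
      unfolding reidx by simp
    also have "\<dots> = (\<Sum>m<n. tensor_op (U m) (V m) x y)"
      unfolding U_def V_def tensor_outer tvs
      by (intro sum.cong refl) (simp add: outer_def split: prod.splits)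
    finally show "proj psi x y = (\<Sum>m<n. tensor_op (U m) (V m) x y)" .
  qed
  have tnU: "trace_norm (U m) * trace_norm (V m) = (\<lambda>(i, j). sqrt (p i) * sqrt (p j)) (g m)" for m
    unfolding U_def V_def tn_outer sp_def vnorm_scale onb_vnorm[OF onb1] onb_vnorm[OF onb2]
    using p0 by (simp split: prod.splits)
  have val: "(\<Sum>m<n. trace_norm (U m) * trace_norm (V m)) = S"
    unfolding tnU reidx S_def by (simp add: real_sqrt_mult)
  have mem: "S \<in> R" unfolding R_def using dec val by blast
  have bdd: "bdd_below R" unfolding bdd_below_def using lb by blast
  have "Inf R = S"
  proof (rule antisym)
    show "Inf R \<le> S" by (rule cInf_lower[OF mem bdd])
    show "S \<le> Inf R" using mem lb by (intro cInf_greatest) auto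
  qed
  moreover have "gamma_norm (proj psi) = Inf R" unfolding gamma_norm_def R_def ..
  ultimately show ?thesis using S2 unfolding S_def by simp
qed

end
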